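(* Let $A$ be an absolute-valued algebra with left unit $e$, whose norm comes from the inner product $\langle\cdot|\cdot\rangle$, and assume $x^2e=x^2$ for all $x\in A$. Then (1) $(x^2)^2=-\|x\|^4e+2\langle e|x^2\rangle x^2$ for all $x\in A$; (2) $x^2(xe)=\|x\|^2x+2\langle e|x^2\rangle xe$ for all $x\in A$ orthogonal to $e$.
   Context: An absolute-valued algebra is a nonzero real algebra with a norm satisfying $\|xy\|=\|x\|\|y\|$; when it has a left unit $e$ ($ex=x$ for all $x$), its norm is induced by an inner product $\langle\cdot|\cdot\rangle$ with $\|x\|^2=\langle x|x\rangle$. *)

theory Defs
  imports "HOL-Analysis.Analysis"
begin

text \<open>Since the norm of a real_inner space is the one induced by the
inner product, the standing assumption that the norm comes from an inner product is built in.\<close>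

definition absolute_valued_algebra :: "('a::real_inner \<Rightarrow> 'a \<Rightarrow> 'a) \<Rightarrow> bool" where
  "absolute_valued_algebra mul \<longleftrightarrow>
     bilinear mul \<and> (\<exists>x::'a. x \<noteq> 0) \<and> (\<forall>x y. norm (mul x y) = norm x * norm y)"

definition is_left_unit :: "('a \<Rightarrow> 'a \<Rightarrow> 'a) \<Rightarrow> 'a \<Rightarrow> bool" where
  "is_left_unit mul e \<longleftrightarrow> (\<forall>x. mul e x = x)"

end

theory Submission
  imports Defs
begin

lemma avQ:
  assumes "absolute_valued_algebra mul"
  shows "inner (mul p q) (mul p q) = inner p p * inner q q"
proof -
  have "norm (mul p q) = norm p * norm q" using assms unfolding absolute_valued_algebra_def by blast
  hence "(norm (mul p q))^2 = (norm p)^2 * (norm q)^2" by (simp add: power_mult_distrib)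
  thus ?thesis by (simp add: power2_norm_eq_inner)
qed

lemma avM:
  assumes "absolute_valued_algebra mul"
  shows "inner (mul p q) (mul p s) = inner p p * inner q s"
proof -
  have b: "bilinear mul" using assms unfolding absolute_valued_algebra_def by blast
  have "inner (mul p (q+s)) (mul p (q+s)) = inner p p * inner (q+s) (q+s)" by (rule avQ[OF assms])
  moreover have "mul p (q+s) = mul p q + mul p s" by (rule bilinear_radd[OF b])
  ultimately have "inner (mul p q + mul p s) (mul p q + mul p s) = inner p p * inner (q+s) (q+s)" by simp
  hence "inner (mul p q) (mul p q) + 2 * inner (mul p q) (mul p s) + inner (mul p s) (mul p s)
     = inner p p * (inner q q + 2 * inner q s + inner s s)"
    by (simp add: inner_add_left inner_add_right inner_commute algebra_simps)
  thus ?thesis using avQ[OF assms, of p q] avQ[OF assms, of p s] by (simp add: algebra_simps)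
qed

lemma avK:
  assumes "absolute_valued_algebra mul"
  shows "inner (mul p q) (mul r s) + inner (mul r q) (mul p s) = 2 * inner p r * inner q s"
proof -
  have b: "bilinear mul" using assms unfolding absolute_valued_algebra_def by blast
  have "inner (mul (p+r) q) (mul (p+r) s) = inner (p+r) (p+r) * inner q s" by (rule avM[OF assms])
  moreover have "mul (p+r) q = mul p q + mul r q" by (rule bilinear_ladd[OF b])
  moreover have "mul (p+r) s = mul p s + mul r s" by (rule bilinear_ladd[OF b])
  ultimately have "inner (mul p q + mul r q) (mul p s + mul r s) = inner (p+r) (p+r) * inner q s" by simp
  hence "inner (mul p q) (mul p s) + inner (mul p q) (mul r s) + inner (mul r q) (mul p s) + inner (mul r q) (mul r s)
     = (inner p p + 2 * inner p r + inner r r) * inner q s"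
    by (simp add: inner_add_left inner_add_right inner_commute algebra_simps)
  thus ?thesis using avM[OF assms, of p q s] avM[OF assms, of r q s] by (simp add: algebra_simps)
qed

theorem lemma5:
  fixes mul :: "'a::real_inner \<Rightarrow> 'a \<Rightarrow> 'a" and e :: 'a
  assumes "absolute_valued_algebra mul"
    and "is_left_unit mul e"
    and "\<forall>x. mul (mul x x) e = mul x x"
  shows "(\<forall>x. mul (mul x x) (mul x x)
              = (- (norm x ^ 4)) *\<^sub>R e + (2 * (e \<bullet> mul x x)) *\<^sub>R mul x x)
       \<and> (\<forall>x. e \<bullet> x = 0 \<longrightarrow>
              mul (mul x x) (mul x e)
              = (norm x ^ 2) *\<^sub>R x + (2 * (e \<bullet> mul x x)) *\<^sub>R mul x e)"
proof -
  note av = assms(1)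
  have lu: "\<And>y. mul e y = y" using assms(2) unfolding is_left_unit_def by blast
  have sq: "\<And>y. mul (mul y y) e = mul y y" using assms(3) by blast
  have ee: "inner e e = 1"
  proof -
    obtain z :: 'a where z: "z \<noteq> 0" using av unfolding absolute_valued_algebra_def by blast
    have "inner (mul e z) (mul e z) = inner e e * inner z z" by (rule avQ[OF av])
    hence "inner z z = inner e e * inner z z" by (simp add: lu)
    moreover have "inner z z \<noteq> 0" using z by simp
    ultimately show ?thesis by simp
  qed
  have nx: "\<And>y. inner y y = (norm y)^2" by (simp add: power2_norm_eq_inner)
  show ?thesis
  proof (intro conjI allI impI)
    fix x :: 'a
    define a where "a = mul x x"
    define u where "u = mul a a"
    define n where "n = inner a a"
    define t where "t = inner e a"
    have n4: "n = norm x ^ 4"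
      using avQ[OF av, of x x] unfolding n_def a_def by (simp add: nx power_mult_distrib flip: power_add)
    have uu: "inner u u = n * n" unfolding u_def n_def by (rule avQ[OF av])
    have ua: "inner u a = n * t"
      using avM[OF av, of a a e] sq[of x] unfolding u_def n_def t_def a_def[symmetric]
      by (simp add: inner_commute)
    have ue: "inner u e = 2*t*t - n"
      using avK[OF av, of a a e e] lu[of e] lu[of a] sq[of x]
      unfolding u_def n_def t_def a_def[symmetric] by (simp add: inner_commute algebra_simps)
    define w where "w = u + n *\<^sub>R e - (2*t) *\<^sub>R a"
    have "inner w w = inner u u + n*n*inner e e + 4*t*t*n + 2*n*inner u e - 4*t*inner u a - 4*t*n*inner e a"
      unfolding w_def n_def
      by (simp add: inner_add_left inner_add_right inner_diff_left inner_diff_right inner_commute algebra_simps)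
    also have "\<dots> = 0" unfolding t_def[symmetric] uu ua ue ee by (simp add: algebra_simps)
    finally have "w = 0" by simp
    hence "u = (- n) *\<^sub>R e + (2*t) *\<^sub>R a" unfolding w_def by (simp add: algebra_simps)
    thus "mul (mul x x) (mul x x) = (- (norm x ^ 4)) *\<^sub>R e + (2 * (e \<bullet> mul x x)) *\<^sub>R mul x x"
      unfolding u_def a_def t_def n4 .
  next
    fix x :: 'a
    assume ex: "inner e x = 0"
    define a where "a = mul x x"
    define v where "v = mul x e"
    define n where "n = inner x x"
    define t where "t = inner e a"
    have avv: "inner (mul a v) (mul a v) = n*n*n"
      using avQ[OF av, of a v] avQ[OF av, of x x] avQ[OF av, of x e] ee
      unfolding a_def v_def n_def by simp
    have vv: "inner v v = n" using avQ[OF av, of x e] ee unfolding v_def n_def by simp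
    have avv2: "inner (mul a v) v = n * t"
      using avK[OF av, of a v e v] lu[of v] vv unfolding t_def
      by (simp add: inner_commute algebra_simps)
    have xv: "inner x v = - t"
      using avK[OF av, of e x x e] lu[of x] lu[of e] ex unfolding v_def t_def a_def
      by (simp add: inner_commute algebra_simps)
    have axv: "inner (mul a x) v = - (n*n)"
      using avK[OF av, of a x x e] sq[of x] ex avQ[OF av, of x x] unfolding v_def a_def n_def
      by (simp add: inner_commute algebra_simps)
    have avx: "inner (mul a v) x = n*n - 2*t*t"
      using avK[OF av, of a v e x] lu[of x] lu[of v] axv xv ee unfolding t_def
      by (simp add: inner_commute algebra_simps)
    define w where "w = mul a v - n *\<^sub>R x - (2*t) *\<^sub>R v"
    have "inner w w = inner (mul a v) (mul a v) + n*n*inner x x + 4*t*t*inner v v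
        - 2*n*inner (mul a v) x - 4*t*inner (mul a v) v + 4*t*n*inner x v"
      unfolding w_def
      by (simp add: inner_add_left inner_add_right inner_diff_left inner_diff_right inner_commute algebra_simps)
    also have "\<dots> = 0" unfolding n_def[symmetric] avv vv avv2 xv avx by (simp add: algebra_simps)
    finally have "w = 0" by simp
    hence "mul a v = n *\<^sub>R x + (2*t) *\<^sub>R v" unfolding w_def by (simp add: algebra_simps)
    thus "mul (mul x x) (mul x e) = (norm x ^ 2) *\<^sub>R x + (2 * (e \<bullet> mul x x)) *\<^sub>R mul x e"
      unfolding a_def v_def t_def n_def by (simp add: nx)
  qed
qed

end
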